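(* For every integer $d\ge 1$, the Euclidean space $\mathbb R^d$ and the $d$-dimensional real hyperbolic space $\mathbb H^d$ are almost-isometry unique.
   Context: For $\lambda>1$, an injection $f$ between metric spaces is $\lambda$-bi-Lipschitz if for all distinct $a,b$ in its domain, $d(f(a),f(b))<\lambda d(a,b)$ and $d(a,b)<\lambda d(f(a),f(b))$. Two metric spaces $X,Y$ are almost isometric if for every $\lambda>1$ there is a $\lambda$-bi-Lipschitz bijection from $X$ onto $Y$. A metric space $X$ is almost-isometry unique if every metric space almost isometric to $X$ is isometric to $X$. *)

theory Defs
  imports "HOL-Analysis.Analysis"
begin

definition bi_lipschitz :: "real \<Rightarrow> ('a \<Rightarrow> 'b) \<Rightarrow> 'a set \<Rightarrow> ('a \<Rightarrow> 'a \<Rightarrow> real)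
    \<Rightarrow> ('b \<Rightarrow> 'b \<Rightarrow> real) \<Rightarrow> bool" where
  "bi_lipschitz lam f X dX dY \<longleftrightarrow> inj_on f X \<and>
     (\<forall>a\<in>X. \<forall>b\<in>X. a \<noteq> b \<longrightarrow>
        dY (f a) (f b) < lam * dX a b \<and> dX a b < lam * dY (f a) (f b))"

definition almost_isometric :: "'a set \<Rightarrow> ('a \<Rightarrow> 'a \<Rightarrow> real) \<Rightarrow> 'b set \<Rightarrow> ('b \<Rightarrow> 'b \<Rightarrow> real) \<Rightarrow> bool" where
  "almost_isometric X dX Y dY \<longleftrightarrow>
     (\<forall>lam > 1. \<exists>f. bij_betw f X Y \<and> bi_lipschitz lam f X dX dY)"

definition isometric :: "'a set \<Rightarrow> ('a \<Rightarrow> 'a \<Rightarrow> real) \<Rightarrow> 'b set \<Rightarrow> ('b \<Rightarrow> 'b \<Rightarrow> real) \<Rightarrow> bool" where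
  "isometric X dX Y dY \<longleftrightarrow>
     (\<exists>f. bij_betw f X Y \<and> (\<forall>a\<in>X. \<forall>b\<in>X. dY (f a) (f b) = dX a b))"

text \<open>Almost-isometry uniqueness, quantifying over all metric spaces whose points
  live in the type 'b. Since the type 'b is left universally quantified in the
  theorem, this covers all metric spaces.\<close>
definition almost_isometry_unique :: "'b itself \<Rightarrow> 'a set \<Rightarrow> ('a \<Rightarrow> 'a \<Rightarrow> real) \<Rightarrow> bool" where
  "almost_isometry_unique (_::'b itself) X dX \<longleftrightarrow>
     (\<forall>(Y::'b set) dY. Metric_space Y dY \<and> almost_isometric X dX Y dY \<longrightarrow> isometric X dX Y dY)"

text \<open>Real hyperbolic space of dimension CARD('n): Poincare ball model.\<close>
definition hyperbolic_space :: "(real ^ 'n) set" where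
  "hyperbolic_space = ball 0 1"

definition hyperbolic_dist :: "real ^ 'n \<Rightarrow> real ^ 'n \<Rightarrow> real" where
  "hyperbolic_dist x y =
     arcosh (1 + 2 * (norm (x - y))\<^sup>2 / ((1 - (norm x)\<^sup>2) * (1 - (norm y)\<^sup>2)))"

end

theory Submission
  imports Defs
begin


lemma bl_le:
  assumes "bi_lipschitz lam f X dX dY" "a\<in>X" "b\<in>X" "dX a a = 0" "dY (f a) (f a) = 0" "lam > 1"
  shows "dY (f a) (f b) \<le> lam * dX a b \<and> dX a b \<le> lam * dY (f a) (f b)"
proof (cases "a = b")
  case True then show ?thesis using assms by simp
next
  case False then show ?thesis using assms unfolding bi_lipschitz_def by (simp add: less_imp_le)
qed

lemma compose_iso:
  assumes "bij_betw f X Y" "bi_lipschitz lam f X dX dY" "bij_betw g X X"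
    "\<forall>a\<in>X. \<forall>b\<in>X. dX (g a) (g b) = dX a b"
  shows "bij_betw (f \<circ> g) X Y \<and> bi_lipschitz lam (f \<circ> g) X dX dY"
proof
  show "bij_betw (f \<circ> g) X Y" using assms bij_betw_trans by blast
  have ig: "inj_on g X" "g ` X = X" using assms(3) by (auto simp: bij_betw_def)
  show "bi_lipschitz lam (f \<circ> g) X dX dY"
    unfolding bi_lipschitz_def
  proof (intro conjI ballI impI)
    show "inj_on (f \<circ> g) X" using assms(1) ig by (auto simp: bij_betw_def intro: comp_inj_on)
    fix a b assume ab: "a \<in> X" "b \<in> X" "a \<noteq> b"
    then have "g a \<noteq> g b" "g a \<in> X" "g b \<in> X" using ig by (auto simp: inj_on_def)
    then show "dY ((f \<circ> g) a) ((f \<circ> g) b) < lam * dX a b" "dX a b < lam * dY ((f \<circ> g) a) ((f \<circ> g) b)"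
      using assms(2,4) ab unfolding bi_lipschitz_def by force+
  qed
qed

lemma le_of_eps:
  fixes u v c :: real
  assumes "\<And>e. 0 < e \<Longrightarrow> e < 1 \<Longrightarrow> u \<le> v + e * c"
  shows "u \<le> v"
proof (rule ccontr)
  assume "\<not> u \<le> v"
  then have uv: "u > v" by simp
  show False
  proof (cases "c \<le> 0")
    case True
    have "(1/2) * c \<le> 0" using True by simp
    with assms[of "1/2"] uv show False by linarith
  next
    case False
    define e where "e = min (1/2) ((u - v) / (2*c))"
    have e: "0 < e" "e < 1" "2 * (e * c) \<le> u - v"
      using False uv by (auto simp: e_def min_def field_simps)
    have "u \<le> v + e * c" using assms e by blast
    with e uv show False by linarith
  qed
qed

theorem general:
  fixes X :: "'a set" and Y :: "'b set"
  assumes MY: "Metric_space Y dY" and AI: "almost_isometric X dX Y dY" and bse: "bse \<in> X"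
    and zero: "\<And>x. x\<in>X \<Longrightarrow> dX x x = 0"
    and trans: "\<And>p. p\<in>X \<Longrightarrow> \<exists>g. bij_betw g X X \<and> g bse = p \<and> (\<forall>a\<in>X. \<forall>b\<in>X. dX (g a) (g b) = dX a b)"
    and seqc: "\<And>r s. (\<forall>n. s n \<in> X \<and> dX bse (s n) \<le> r) \<Longrightarrow>
        \<exists>x\<in>X. \<exists>\<sigma>::nat\<Rightarrow>nat. strict_mono \<sigma> \<and> (\<forall>e>0. \<exists>N. \<forall>n\<ge>N. dX (s (\<sigma> n)) x < e)"
    and tb: "\<And>r e. e>0 \<Longrightarrow> \<exists>F. finite F \<and> F \<subseteq> X \<and> (\<forall>x\<in>X. dX bse x \<le> r \<longrightarrow> (\<exists>a\<in>F. dX a x < e))"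
  shows "isometric X dX Y dY"
proof -
  interpret MY: Metric_space Y dY by fact
  define l where "l n = 1 + 1/(real n + 1)" for n :: nat
  have l1: "1 < l n" "l n \<le> 2" for n
    by (auto simp: l_def field_simps)
  have "\<forall>n. \<exists>f. bij_betw f X Y \<and> bi_lipschitz (l n) f X dX dY"
    using AI l1 unfolding almost_isometric_def by blast
  then obtain F where F: "\<And>n. bij_betw (F n) X Y" "\<And>n. bi_lipschitz (l n) (F n) X dX dY"
    by metis
  define y0 where "y0 = F 0 bse"
  have y0: "y0 \<in> Y" using F(1) bse unfolding y0_def by (meson bij_betwE)
  have "\<forall>n. \<exists>G. bij_betw G X Y \<and> bi_lipschitz (l n) G X dX dY \<and> G bse = y0"
  proof
    fix n
    let ?p = "inv_into X (F n) y0"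
    have p: "?p \<in> X" "F n ?p = y0" using F(1)[of n] y0
      by (auto simp: bij_betw_def inv_into_into f_inv_into_f)
    obtain g where g: "bij_betw g X X" "g bse = ?p" "\<forall>a\<in>X. \<forall>b\<in>X. dX (g a) (g b) = dX a b"
      using trans[OF p(1)] by blast
    show "\<exists>G. bij_betw G X Y \<and> bi_lipschitz (l n) G X dX dY \<and> G bse = y0"
      using compose_iso[OF F(1) F(2) g(1) g(3)] g(2) p(2) by (intro exI[of _ "F n \<circ> g"]) auto
  qed
  then obtain G where G: "\<And>n. bij_betw (G n) X Y" "\<And>n. bi_lipschitz (l n) (G n) X dX dY"
    "\<And>n. G n bse = y0"
    by metis
  have GY: "G n x \<in> Y" if "x \<in> X" for n x using G(1) that by (meson bij_betwE)
  have Gle: "dY (G n a) (G n b) \<le> l n * dX a b" "dX a b \<le> l n * dY (G n a) (G n b)"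
    if "a \<in> X" "b \<in> X" for n a b
    using bl_le[OF G(2) that zero[OF that(1)]] GY[OF that(1)] l1 by auto
  have dXnn: "0 \<le> dX a b" if "a \<in> X" "b \<in> X" for a b
  proof -
    have "0 \<le> l 0 * dX a b" using Gle(1)[of a b 0, OF that] MY.nonneg[of "G 0 a" "G 0 b"] by linarith
    then show ?thesis using l1[of 0] by (simp add: zero_le_mult_iff)
  qed
  have Ginv: "inv_into X (G n) y \<in> X \<and> G n (inv_into X (G n) y) = y" if "y \<in> Y" for n y
    using G(1)[of n] that by (auto simp: bij_betw_def inv_into_into f_inv_into_f)
  have cball_compact: "compactin MY.mtopology (MY.mcball y0 r)" for r
    unfolding MY.compactin_sequentially
  proof (intro conjI allI impI)
    show "MY.mcball y0 r \<subseteq> Y" by (rule MY.mcball_subset_mspace)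
    fix \<sigma> :: "nat \<Rightarrow> 'b" assume sig: "range \<sigma> \<subseteq> MY.mcball y0 r"
    define s where "s n = inv_into X (G 0) (\<sigma> n)" for n
    have "\<sigma> n \<in> MY.mcball y0 r" for n using sig by blast
    then have sigY: "\<sigma> n \<in> Y" "dY y0 (\<sigma> n) \<le> r" for n by auto
    have s: "s n \<in> X" "G 0 (s n) = \<sigma> n" for n using Ginv sigY unfolding s_def by auto
    have "dX bse (s n) \<le> 2 * r" for n
    proof -
      have "dX bse (s n) \<le> l 0 * dY y0 (\<sigma> n)" using Gle(2)[of bse "s n" 0, OF bse s(1)] s G(3) by simp
      also have "\<dots> \<le> 2 * r" using l1[of 0] sigY[of n] MY.nonneg[of y0 "\<sigma> n"]
        by (intro mult_mono) auto
      finally show ?thesis .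
    qed
    then have "\<forall>n. s n \<in> X \<and> dX bse (s n) \<le> 2 * r" using s by blast
    from seqc[OF this] obtain x and \<sigma>' :: "nat \<Rightarrow> nat" where x: "x \<in> X" "strict_mono \<sigma>'"
      "\<forall>e>0. \<exists>N. \<forall>n\<ge>N. dX (s (\<sigma>' n)) x < e"
      by blast
    have lim: "\<exists>N. \<forall>n\<ge>N. dY (\<sigma> (\<sigma>' n)) (G 0 x) < e" if "e > 0" for e
    proof -
      obtain N where N: "\<forall>n\<ge>N. dX (s (\<sigma>' n)) x < e/2" using x(3) \<open>e>0\<close> by (meson half_gt_zero)
      have "dY (\<sigma> (\<sigma>' n)) (G 0 x) < e" if "n \<ge> N" for n
      proof -
        have "dY (\<sigma> (\<sigma>' n)) (G 0 x) \<le> l 0 * dX (s (\<sigma>' n)) x" using Gle(1)[of "s (\<sigma>' n)" x 0, OF s(1) x(1)] s by simp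
        also have "\<dots> \<le> 2 * dX (s (\<sigma>' n)) x" using l1[of 0] dXnn[OF s(1) x(1)] by (simp add: mult_right_mono)
        also have "\<dots> < e" using N that by auto
        finally show ?thesis .
      qed
      then show ?thesis by blast
    qed
    have inb: "G 0 x \<in> MY.mcball y0 r"
    proof -
      have "dY y0 (G 0 x) \<le> r"
      proof (rule field_le_epsilon)
        fix e :: real assume "e > 0"
        then obtain N where "\<forall>n\<ge>N. dY (\<sigma> (\<sigma>' n)) (G 0 x) < e" using lim by blast
        then have "dY (\<sigma> (\<sigma>' N)) (G 0 x) < e" by simp
        moreover have "dY y0 (G 0 x) \<le> dY y0 (\<sigma> (\<sigma>' N)) + dY (\<sigma> (\<sigma>' N)) (G 0 x)"
          using MY.triangle y0 sigY GY x by blast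
        ultimately show "dY y0 (G 0 x) \<le> r + e" using sigY[of "\<sigma>' N"] by linarith
      qed
      then show ?thesis using y0 GY[OF x(1)] by simp
    qed
    show "\<exists>z \<rho>. z \<in> MY.mcball y0 r \<and> strict_mono \<rho> \<and> limitin MY.mtopology (\<sigma> \<circ> \<rho>) z sequentially"
      using inb x(2) lim sigY GY[OF x(1)]
      by (intro exI[of _ "G 0 x"] exI[of _ \<sigma>']) (auto simp: MY.limit_metric_sequentially)
  qed

  define R where "R x = 2 * dX bse x" for x
  define T where "T = product_topology (\<lambda>x. subtopology MY.mtopology (MY.mcball y0 (R x))) X"
  have cT: "compact_space T"
    unfolding T_def compact_space_product_topology
    using cball_compact compact_space_subtopology by blast
  have topT: "topspace T = (\<Pi>\<^sub>E x\<in>X. MY.mcball y0 (R x))"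
    unfolding T_def by (simp add: MY.mcball_subset_mspace inf.absorb2)
  define \<Phi> where "\<Phi> n = restrict (G n) X" for n
  have \<Phi>: "\<Phi> n \<in> topspace T" for n
  proof -
    have "G n x \<in> MY.mcball y0 (R x)" if "x \<in> X" for x
    proof -
      have "dY y0 (G n x) \<le> l n * dX bse x" using Gle(1)[of bse x n, OF bse that] G(3) by simp
      also have "\<dots> \<le> 2 * dX bse x" using l1[of n] dXnn[OF bse that] by (simp add: mult_right_mono)
      finally show ?thesis using y0 GY[OF that] by (simp add: R_def)
    qed
    then show ?thesis unfolding topT \<Phi>_def by auto
  qed
  define C where "C N = T closure_of (\<Phi> ` {N..})" for N
  have "\<Inter>(range C) \<noteq> {}"
  proof -
    have "\<Inter>\<F> \<noteq> {}" if FF: "finite \<F>" "\<F> \<subseteq> range C" for \<F>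
    proof -
      obtain Ns where Ns: "finite Ns" "\<F> = C ` Ns" using finite_subset_image[OF FF] by blast
      define M where "M = Max (insert 0 Ns)"
      have "\<Phi> M \<in> C N" if "N \<in> Ns" for N
      proof -
        have "N \<le> M" using that Ns(1) unfolding M_def by simp
        then have "\<Phi> M \<in> \<Phi> ` {N..}" by auto
        moreover have "\<Phi> ` {N..} \<subseteq> topspace T" using \<Phi> by auto
        ultimately show ?thesis unfolding C_def using closure_of_subset by blast
      qed
      then show ?thesis using Ns by auto
    qed
    then show ?thesis using cT unfolding compact_space_fip C_def by auto
  qed
  then obtain P where P: "\<And>N. P \<in> C N" by blast
  have PT: "P \<in> topspace T" using P[of 0] closure_of_subset_topspace[of T "\<Phi> ` {0..}"] unfolding C_def by blast
  have PY: "P x \<in> MY.mcball y0 (R x)" if "x \<in> X" for x using PT that unfolding topT by auto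
  have PY': "P x \<in> Y" if "x \<in> X" for x using PY[OF that] by auto
  have key: "\<exists>n\<ge>N. \<forall>a\<in>A. dY (G n a) (P a) < \<epsilon>" if A: "finite A" "A \<subseteq> X" and "\<epsilon> > 0" for A \<epsilon> N
  proof -
    define U where "U a = {h \<in> topspace T. h a \<in> MY.mball (P a) \<epsilon>}" for a
    have "openin T (U a)" if "a \<in> X" for a
    proof -
      have "continuous_map T (subtopology MY.mtopology (MY.mcball y0 (R a))) (\<lambda>h. h a)"
        unfolding T_def using that by (rule continuous_map_product_projection)
      then have "continuous_map T MY.mtopology (\<lambda>h. h a)"
        by (rule continuous_map_into_fulltopology)
      then show ?thesis unfolding U_def by (rule openin_continuous_map_preimage) simp
    qed
    then have oU: "openin T ((\<Inter>a\<in>A. U a) \<inter> topspace T)" using A by blast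
    have "P \<in> (\<Inter>a\<in>A. U a) \<inter> topspace T" using PT PY' A(2) \<open>\<epsilon>>0\<close> unfolding U_def by auto
    with P[of N] oU obtain h where "h \<in> \<Phi> ` {N..}" "h \<in> (\<Inter>a\<in>A. U a) \<inter> topspace T"
      unfolding C_def in_closure_of by blast
    then obtain n where n: "n \<ge> N" "\<forall>a\<in>A. \<Phi> n a \<in> MY.mball (P a) \<epsilon>" unfolding U_def by auto
    have "dY (G n a) (P a) < \<epsilon>" if "a \<in> A" for a
      using n(2) that A(2) unfolding \<Phi>_def by (auto simp: MY.commute subset_iff)
    then show ?thesis using n(1) by blast
  qed

  have lN: "l n \<le> 1 + e" if "inverse (real (Suc N)) < e" "n \<ge> N" for n N e
  proof -
    have "1 / (real n + 1) \<le> 1 / (real N + 1)" using that(2) by (simp add: frac_le)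
    moreover have "inverse (real (Suc N)) = 1 / (real N + 1)"
      by (metis add.commute inverse_eq_divide of_nat_Suc)
    ultimately show ?thesis using that(1) unfolding l_def by linarith
  qed
  have iso: "dY (P a) (P b) = dX a b" if ab: "a \<in> X" "b \<in> X" for a b
  proof -
    let ?u = "dY (P a) (P b)" and ?v = "dX a b"
    have ineqs: "?u \<le> ?v + e * (2 + ?v) \<and> ?v \<le> ?u + e * (?u + 4)" if e: "0 < e" "e < 1" for e
    proof -
      obtain N where N: "inverse (real (Suc N)) < e" using reals_Archimedean e(1) by blast
      obtain n where n: "n \<ge> N" "\<forall>c\<in>{a,b}. dY (G n c) (P c) < e"
        using key[of "{a,b}" e N] ab e by auto
      have ln: "l n \<le> 1 + e" using lN[OF N n(1)] .
      let ?w = "dY (G n a) (G n b)"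
      have da: "dY (G n a) (P a) < e" and db: "dY (G n b) (P b) < e" using n(2) by auto
      have t1: "?u \<le> dY (P a) (G n a) + ?w + dY (G n b) (P b)"
        using MY.triangle[of "P a" "G n a" "P b"] MY.triangle[of "G n a" "G n b" "P b"] GY ab PY' by fastforce
      have t2: "?w \<le> dY (G n a) (P a) + ?u + dY (P b) (G n b)"
        using MY.triangle[of "G n a" "P a" "G n b"] MY.triangle[of "P a" "P b" "G n b"] GY ab PY' by fastforce
      have w1: "?w \<le> (1 + e) * ?v"
        using Gle(1)[of a b n, OF ab] ln dXnn[OF ab] by (meson mult_right_mono order_trans)
      have v1: "?v \<le> (1 + e) * ?w"
        using Gle(2)[of a b n, OF ab] ln MY.nonneg[of "G n a" "G n b"] by (meson mult_right_mono order_trans)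
      have w2: "(1 + e) * ?w \<le> (1 + e) * (?u + 2 * e)"
        using t2 da db MY.commute[of "P b" "G n b"] e by (intro mult_left_mono) auto
      have ee: "e * e \<le> e" using e by (simp add: mult_le_cancel_left1)
      have eq1: "(1 + e) * (?u + 2 * e) = ?u + e * ?u + 2 * e + 2 * (e * e)" by (simp add: algebra_simps)
      have eq2: "(1 + e) * ?v = ?v + e * ?v" by (simp add: algebra_simps)
      have "?u \<le> ?v + e * (2 + ?v)"
        using t1 w1 eq2 da db MY.commute[of "P a" "G n a"] by (simp add: algebra_simps)
      moreover have "?v \<le> ?u + e * (?u + 4)"
        using v1 w2 eq1 ee by (simp add: algebra_simps)
      ultimately show ?thesis by blast
    qed
    have "?u \<le> ?v" by (rule le_of_eps[of _ _ "2 + ?v"]) (use ineqs in blast)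
    moreover have "?v \<le> ?u" by (rule le_of_eps[of _ _ "?u + 4"]) (use ineqs in blast)
    ultimately show ?thesis by simp
  qed
  have Px0: "P bse = y0"
  proof -
    have "dY y0 (P bse) \<le> 0" using PY[OF bse] zero[OF bse] by (simp add: R_def)
    then have "dY y0 (P bse) = 0" using MY.nonneg[of y0 "P bse"] by linarith
    then show ?thesis using y0 PY'[OF bse] by simp
  qed
  have dXpos: "0 < dX a b" if "a \<in> X" "b \<in> X" "a \<noteq> b" for a b
  proof -
    have "G 0 a \<noteq> G 0 b" using G(1)[of 0] that by (auto simp: bij_betw_def inj_on_def)
    then have "0 < dY (G 0 a) (G 0 b)" using GY that MY.nonneg[of "G 0 a" "G 0 b"] MY.zero
      by (metis order_le_less)
    moreover have "dY (G 0 a) (G 0 b) < l 0 * dX a b" using G(2)[of 0] that unfolding bi_lipschitz_def by blast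
    ultimately have "0 < l 0 * dX a b" by linarith
    then show ?thesis using l1[of 0] by (simp add: zero_less_mult_iff)
  qed
  have injP: "inj_on P X"
  proof (rule inj_onI, rule ccontr)
    fix a b assume ab: "a \<in> X" "b \<in> X" "P a = P b" "a \<noteq> b"
    then have "dY (P a) (P b) = 0" using PY' by simp
    then show False using iso[OF ab(1,2)] dXpos[OF ab(1,2,4)] by simp
  qed
  have surjP: "\<exists>x\<in>X. P x = y" if y: "y \<in> Y" for y
  proof -
    define r where "r = dY y0 y + 1"
    have approx: "\<exists>x\<in>X. dX bse x \<le> r \<and> dY (P x) y < e" if e: "0 < e" "e \<le> 1" for e
    proof -
      obtain Fn where Fn: "finite Fn" "Fn \<subseteq> X" "\<forall>x\<in>X. dX bse x \<le> 2 * dY y0 y \<longrightarrow> (\<exists>a\<in>Fn. dX a x < e/4)"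
        using tb[of "e/4" "2 * dY y0 y"] e by auto
      obtain n where n: "\<forall>a\<in>Fn. dY (G n a) (P a) < e/4" using key[OF Fn(1,2), of "e/4" 0] e by auto
      define xs where "xs = inv_into X (G n) y"
      have xs: "xs \<in> X" "G n xs = y" using Ginv[OF y] unfolding xs_def by auto
      have "dX bse xs \<le> l n * dY y0 y" using Gle(2)[of bse xs n, OF bse xs(1)] xs G(3) by simp
      also have "\<dots> \<le> 2 * dY y0 y" using l1[of n] MY.nonneg[of y0 y] by (simp add: mult_right_mono)
      finally obtain a where a: "a \<in> Fn" "dX a xs < e/4" using Fn(3) xs(1) by blast
      have aX: "a \<in> X" using a Fn(2) by auto
      have t: "dY (P a) y \<le> dY (P a) (G n a) + dY (G n a) (G n xs)"
        using MY.triangle[of "P a" "G n a" y] PY' aX GY y xs by auto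
      have t2: "dY (G n a) (G n xs) \<le> 2 * dX a xs"
        using Gle(1)[of a xs n, OF aX xs(1)] l1[of n] dXnn[OF aX xs(1)] by (meson mult_right_mono order_trans)
      have n': "dY (G n a) (P a) < e/4" using n a(1) by blast
      from t t2 n' have "dY (P a) y < e" using a(2) MY.commute[of "P a" "G n a"] e(1) by linarith
      moreover have "dX bse a \<le> r"
      proof -
        have "dX bse a = dY y0 (P a)" using iso[OF bse aX] Px0 by simp
        also have "\<dots> \<le> dY y0 y + dY y (P a)" using MY.triangle y0 y PY' aX by blast
        finally show ?thesis using \<open>dY (P a) y < e\<close> e MY.commute[of y "P a"] unfolding r_def by linarith
      qed
      ultimately show ?thesis using aX by blast
    qed
    have "\<forall>k. \<exists>x. x \<in> X \<and> dX bse x \<le> r \<and> dY (P x) y < 1 / (real k + 1)"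
    proof
      fix k :: nat
      show "\<exists>x. x \<in> X \<and> dX bse x \<le> r \<and> dY (P x) y < 1 / (real k + 1)"
        using approx[of "1 / (real k + 1)"] by (auto simp: field_simps)
    qed
    then obtain s where s: "\<And>k. s k \<in> X" "\<And>k. dX bse (s k) \<le> r" "\<And>k. dY (P (s k)) y < 1 / (real k + 1)"
      by metis
    have "\<forall>n. s n \<in> X \<and> dX bse (s n) \<le> r" using s by blast
    from seqc[OF this] obtain x and \<sigma> :: "nat \<Rightarrow> nat" where
      x: "x \<in> X" "strict_mono \<sigma>" "\<forall>e>0. \<exists>N. \<forall>n\<ge>N. dX (s (\<sigma> n)) x < e" by blast
    have "dY (P x) y \<le> 0"
    proof (rule field_le_epsilon)
      fix e :: real assume e: "0 < e"
      obtain N1 where N1: "\<forall>n\<ge>N1. dX (s (\<sigma> n)) x < e/2" using x(3) e by (meson half_gt_zero)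
      obtain N2 where N2: "inverse (real (Suc N2)) < e/2" using reals_Archimedean e by (meson half_gt_zero)
      define k where "k = max N1 N2"
      have "k \<le> \<sigma> k" using x(2) by (rule seq_suble)
      then have "1 / (real (\<sigma> k) + 1) \<le> 1 / (real N2 + 1)" unfolding k_def by (simp add: frac_le)
      moreover have "inverse (real (Suc N2)) = 1 / (real N2 + 1)"
        by (metis add.commute inverse_eq_divide of_nat_Suc)
      ultimately have sk: "dY (P (s (\<sigma> k))) y < e/2" using s(3)[of "\<sigma> k"] N2 by linarith
      have "dY (P x) y \<le> dY (P x) (P (s (\<sigma> k))) + dY (P (s (\<sigma> k))) y"
        using MY.triangle PY' x(1) s(1) y by blast
      also have "dY (P x) (P (s (\<sigma> k))) = dX (s (\<sigma> k)) x" using iso[OF s(1) x(1)] MY.commute by simp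
      finally have fin: "dY (P x) y \<le> dX (s (\<sigma> k)) x + dY (P (s (\<sigma> k))) y" .
      have "dX (s (\<sigma> k)) x < e/2" using N1 unfolding k_def by simp
      then show "dY (P x) y \<le> 0 + e" using fin sk by linarith
    qed
    then have "dY (P x) y = 0" using MY.nonneg[of "P x" y] by linarith
    then show ?thesis using x(1) PY'[OF x(1)] y by auto
  qed
  have "bij_betw P X Y" unfolding bij_betw_def using injP surjP PY' by blast
  then show ?thesis unfolding isometric_def using iso by blast
qed



lemma S1:
  fixes A X p D b :: real
  assumes D0: "D \<noteq> 0" and D: "D = 1 + 2 * p + A * X" and b: "b = 1 + 2 * p + X"
  shows "1 - (((1-A)/D)^2 * X + 2 * ((1-A)/D) * (b/D) * p + (b/D)^2 * A) = (1-A) * (1-X)/D"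
proof -
  have "D * D - ((1-A) * (1-A) * X + 2 * (1-A) * b * p + b * b * A) = (1-A) * (1-X) * D"
    unfolding D b by algebra
  then show ?thesis using D0 by (simp add: field_simps power2_eq_square) algebra
qed

lemma S2:
  fixes A X Y p q xy Dx Dy bx byy :: real
  assumes Dx0: "Dx \<noteq> 0" and Dy0: "Dy \<noteq> 0" and Dx: "Dx = 1 + 2 * p + A * X" and Dy: "Dy = 1 + 2 * q + A * Y"
    and bx: "bx = 1 + 2 * p + X" and byy: "byy = 1 + 2 * q + Y"
  shows "((1-A)/Dx)^2 * X + (- ((1-A)/Dy))^2 * Y + (bx/Dx - byy/Dy)^2 * A
     + 2 * ((1-A)/Dx) * (- ((1-A)/Dy)) * xy + 2 * ((1-A)/Dx) * (bx/Dx - byy/Dy) * p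
     + 2 * (- ((1-A)/Dy)) * (bx/Dx - byy/Dy) * q
   = (1-A)^2 * (X - 2 * xy + Y) / (Dx * Dy)"
proof -
  have "(1-A) * (1-A) * X * Dy * Dy + (1-A) * (1-A) * Y * Dx * Dx + (bx * Dy - byy * Dx) * (bx * Dy - byy * Dx) * A
     - 2 * (1-A) * (1-A) * xy * Dx * Dy + 2 * (1-A) * (bx * Dy - byy * Dx) * p * Dy
     - 2 * (1-A) * (bx * Dy - byy * Dx) * q * Dx
     = (1-A) * (1-A) * (X - 2 * xy + Y) * Dx * Dy"
    unfolding Dx Dy bx byy by algebra
  then show ?thesis using Dx0 Dy0 by (simp add: field_simps power2_eq_square) algebra
qed

lemma S3:
  fixes A X p uu vv D :: real
  assumes D0: "D \<noteq> 0" and D: "D = 1 - 2 * p + A * X"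
    and u: "uu = (1-A)/D" and v: "vv = - ((1 - 2 * p + X)/D)"
  shows "(1-A) * uu = 1 + 2 * (uu * p + vv * A) + A * (uu^2 * X + 2 * uu * vv * p + vv^2 * A)"
    and "(1-A) * vv + 1 + 2 * (uu * p + vv * A) + (uu^2 * X + 2 * uu * vv * p + vv^2 * A) = 0"
proof -
  have "(1-A) * (1-A) * D = D * D + 2 * ((1-A) * p - (1 - 2 * p + X) * A) * D
      + A * ((1-A) * (1-A) * X - 2 * (1-A) * (1 - 2 * p + X) * p + (1 - 2 * p + X) * (1 - 2 * p + X) * A)"
    unfolding D by algebra
  then show "(1-A) * uu = 1 + 2 * (uu * p + vv * A) + A * (uu^2 * X + 2 * uu * vv * p + vv^2 * A)"
    unfolding u v using D0 by (simp add: field_simps power2_eq_square) algebra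
  have "- (1-A) * (1 - 2 * p + X) * D + D * D + 2 * ((1-A) * p - (1 - 2 * p + X) * A) * D
      + ((1-A) * (1-A) * X - 2 * (1-A) * (1 - 2 * p + X) * p + (1 - 2 * p + X) * (1 - 2 * p + X) * A) = 0"
    unfolding D by algebra
  then show "(1-A) * vv + 1 + 2 * (uu * p + vv * A) + (uu^2 * X + 2 * uu * vv * p + vv^2 * A) = 0"
    unfolding u v using D0 by (simp add: field_simps power2_eq_square) algebra
qed

definition mD :: "'a::real_inner \<Rightarrow> 'a \<Rightarrow> real" where
  "mD a x = 1 + 2 * inner a x + inner a a * inner x x"

definition mob :: "'a::real_inner \<Rightarrow> 'a \<Rightarrow> 'a" where
  "mob a x = ((1 - inner a a) / mD a x) *\<^sub>R x + ((1 + 2 * inner a x + inner x x) / mD a x) *\<^sub>R a"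

lemma inner_lin2:
  fixes x a y b :: "'a::real_inner"
  shows "inner (u *\<^sub>R x + v *\<^sub>R a) (u' *\<^sub>R y + v' *\<^sub>R b)
    = u * u' * inner x y + u * v' * inner x b + v * u' * inner a y + v * v' * inner a b"
  by (simp add: inner_add_left inner_add_right algebra_simps)

lemma inner_sq2:
  fixes x a :: "'a::real_inner"
  shows "inner (u *\<^sub>R x + v *\<^sub>R a) (u *\<^sub>R x + v *\<^sub>R a) = u^2 * inner x x + 2 * u * v * inner a x + v^2 * inner a a"
  by (simp add: inner_add_left inner_add_right inner_commute algebra_simps power2_eq_square)

lemma inner_lin3:
  fixes x y a :: "'a::real_inner"
  shows "inner (u *\<^sub>R x + v *\<^sub>R y + w *\<^sub>R a) (u *\<^sub>R x + v *\<^sub>R y + w *\<^sub>R a)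
    = u^2 * inner x x + v^2 * inner y y + w^2 * inner a a + 2 * u * v * inner x y
      + 2 * u * w * inner a x + 2 * v * w * inner a y"
  by (simp add: inner_add_left inner_add_right inner_commute algebra_simps power2_eq_square)

lemma mD_pos:
  fixes a x :: "'a::real_inner"
  assumes "norm a < 1" "norm x < 1"
  shows "0 < mD a x"
proof -
  define t where "t = norm a * norm x"
  have "norm a * norm x \<le> norm a * 1" by (rule mult_left_mono) (use assms in auto)
  then have t: "0 \<le> t" "t < 1" using assms unfolding t_def by auto
  have "\<bar>inner a x\<bar> \<le> t" unfolding t_def by (rule Cauchy_Schwarz_ineq2)
  moreover have "inner a a * inner x x = t^2"
    unfolding t_def by (simp add: power2_norm_eq_inner[symmetric] power_mult_distrib)
  moreover have "0 < (1 - t)^2" using t by simp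
  ultimately show ?thesis unfolding mD_def by (simp add: power2_eq_square algebra_simps)
qed

lemma mob_norm:
  fixes a x :: "'a::real_inner"
  assumes "mD a x \<noteq> 0"
  shows "1 - inner (mob a x) (mob a x) = (1 - inner a a) * (1 - inner x x) / mD a x"
proof -
  have "inner (mob a x) (mob a x) = ((1 - inner a a) / mD a x)^2 * inner x x
     + 2 * ((1 - inner a a) / mD a x) * ((1 + 2 * inner a x + inner x x) / mD a x) * inner a x
     + ((1 + 2 * inner a x + inner x x) / mD a x)^2 * inner a a"
    unfolding mob_def by (rule inner_sq2)
  then show ?thesis using S1[OF assms mD_def refl] by simp
qed

lemma mob_dist:
  fixes a x y :: "'a::real_inner"
  assumes "mD a x \<noteq> 0" "mD a y \<noteq> 0"
  shows "inner (mob a x - mob a y) (mob a x - mob a y)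
     = (1 - inner a a)^2 * inner (x - y) (x - y) / (mD a x * mD a y)"
proof -
  let ?ux = "(1 - inner a a) / mD a x" and ?uy = "(1 - inner a a) / mD a y"
  let ?vx = "(1 + 2 * inner a x + inner x x) / mD a x" and ?vy = "(1 + 2 * inner a y + inner y y) / mD a y"
  have eq: "mob a x - mob a y = ?ux *\<^sub>R x + (- ?uy) *\<^sub>R y + (?vx - ?vy) *\<^sub>R a"
    unfolding mob_def by (simp add: algebra_simps)
  have "inner (mob a x - mob a y) (mob a x - mob a y)
     = ?ux^2 * inner x x + (- ?uy)^2 * inner y y + (?vx - ?vy)^2 * inner a a + 2 * ?ux * (- ?uy) * inner x y
       + 2 * ?ux * (?vx - ?vy) * inner a x + 2 * (- ?uy) * (?vx - ?vy) * inner a y"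
    unfolding eq by (rule inner_lin3)
  also have "\<dots> = (1 - inner a a)^2 * (inner x x - 2 * inner x y + inner y y) / (mD a x * mD a y)"
    by (rule S2[OF assms mD_def mD_def refl refl])
  also have "inner x x - 2 * inner x y + inner y y = inner (x - y) (x - y)"
    by (simp add: inner_diff_left inner_diff_right inner_commute)
  finally show ?thesis .
qed

lemma comb:
  fixes x a :: "'a::real_vector"
  shows "(c/E) *\<^sub>R (u *\<^sub>R x + v *\<^sub>R a) + (d/E) *\<^sub>R a = (c * u / E) *\<^sub>R x + ((c * v + d) / E) *\<^sub>R a"
  by (simp add: scaleR_add_right scaleR_add_left add_divide_distrib)

lemma mob_inv:
  fixes a x :: "'a::real_inner"
  assumes "norm a < 1" "norm x < 1"
  shows "mob a (mob (-a) x) = x"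
proof -
  let ?A = "inner a a" and ?X = "inner x x" and ?p = "inner a x"
  define D where "D = 1 - 2 * ?p + ?A * ?X"
  have D: "D = mD (-a) x" unfolding D_def mD_def by simp
  have D0: "D \<noteq> 0" using mD_pos[of "-a" x] assms unfolding D by simp
  define u where "u = (1 - ?A) / D"
  define v where "v = - ((1 - 2 * ?p + ?X) / D)"
  have i1: "inner (-a) (-a) = ?A" "1 + 2 * inner (-a) x + inner x x = 1 - 2 * ?p + ?X" by simp_all
  have i2: "((1 - 2 * ?p + ?X) / D) *\<^sub>R (-a) = v *\<^sub>R a" unfolding v_def by (simp only: scaleR_minus_left scaleR_minus_right)
  have y: "mob (-a) x = u *\<^sub>R x + v *\<^sub>R a"
    unfolding mob_def D[symmetric] i1 i2 u_def ..
  have ay: "inner a (u *\<^sub>R x + v *\<^sub>R a) = u * ?p + v * ?A" by (simp add: inner_add_right)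
  have yy: "inner (u *\<^sub>R x + v *\<^sub>R a) (u *\<^sub>R x + v *\<^sub>R a) = u^2 * ?X + 2 * u * v * ?p + v^2 * ?A"
    unfolding inner_lin2 by (simp add: inner_commute power2_eq_square algebra_simps)
  have e1: "(1 - ?A) * u = mD a (u *\<^sub>R x + v *\<^sub>R a)"
    unfolding mD_def ay yy by (rule S3(1)[OF D0 D_def u_def v_def])
  have e2: "(1 - ?A) * v + (1 + 2 * inner a (u *\<^sub>R x + v *\<^sub>R a) + inner (u *\<^sub>R x + v *\<^sub>R a) (u *\<^sub>R x + v *\<^sub>R a)) = 0"
    unfolding ay yy using S3(2)[OF D0 D_def u_def v_def] by simp
  have A1: "?A < 1" using assms(1) by (simp add: power2_norm_eq_inner[symmetric] abs_square_less_1)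
  have Dp: "0 < D" using mD_pos[of "-a" x] assms unfolding D by simp
  have E0: "mD a (u *\<^sub>R x + v *\<^sub>R a) \<noteq> 0" using e1[symmetric] A1 Dp unfolding u_def by simp
  have "mob a (u *\<^sub>R x + v *\<^sub>R a) = ((1 - ?A) * u / mD a (u *\<^sub>R x + v *\<^sub>R a)) *\<^sub>R x
      + (((1 - ?A) * v + (1 + 2 * inner a (u *\<^sub>R x + v *\<^sub>R a) + inner (u *\<^sub>R x + v *\<^sub>R a) (u *\<^sub>R x + v *\<^sub>R a))) / mD a (u *\<^sub>R x + v *\<^sub>R a)) *\<^sub>R a"
    unfolding mob_def by (rule comb)
  also have "\<dots> = x" unfolding e2 e1[symmetric] using E0 e1 by simp
  finally show ?thesis using y by simp
qed



lemma hd_alt: "hyperbolic_dist x y = arcosh (1 + 2 * inner (x - y) (x - y) / ((1 - inner x x) * (1 - inner y y)))"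
  unfolding hyperbolic_dist_def by (simp add: power2_norm_eq_inner)

lemma inner_lt1: "norm (x::'a::real_inner) < 1 \<Longrightarrow> inner x x < 1"
  by (simp add: power2_norm_eq_inner[symmetric] abs_square_less_1)

lemma mob_facts:
  fixes a x :: "'a::real_inner"
  assumes "norm a < 1" "norm x < 1"
  shows "norm (mob a x) < 1" "1 - inner (mob a x) (mob a x) = (1 - inner a a) * (1 - inner x x) / mD a x"
proof -
  have D: "0 < mD a x" by (rule mD_pos[OF assms])
  show eq: "1 - inner (mob a x) (mob a x) = (1 - inner a a) * (1 - inner x x) / mD a x"
    by (rule mob_norm) (use D in simp)
  have "0 < (1 - inner a a) * (1 - inner x x) / mD a x"
    using inner_lt1[OF assms(1)] inner_lt1[OF assms(2)] D by simp
  then have "inner (mob a x) (mob a x) < 1" using eq by linarith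
  then show "norm (mob a x) < 1"
    by (metis abs_square_less_1 norm_ge_zero abs_of_nonneg power2_norm_eq_inner)
qed

lemma S4:
  fixes al be ga N Dx Dy :: real
  assumes "0 < al" "0 < be" "0 < ga" "0 < Dx" "0 < Dy"
  shows "2 * (al^2 * N / (Dx * Dy)) / ((al * be / Dx) * (al * ga / Dy)) = 2 * N / (be * ga)"
  using assms by (simp add: field_simps power2_eq_square)

lemma hd_mob:
  fixes a x y :: "real ^ 'n"
  assumes "norm a < 1" "norm x < 1" "norm y < 1"
  shows "hyperbolic_dist (mob a x) (mob a y) = hyperbolic_dist x y"
proof -
  have Dx: "0 < mD a x" by (rule mD_pos[OF assms(1,2)])
  have Dy: "0 < mD a y" by (rule mD_pos[OF assms(1,3)])
  have A: "0 < 1 - inner a a" "0 < 1 - inner x x" "0 < 1 - inner y y" using inner_lt1 assms by auto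
  have "2 * inner (mob a x - mob a y) (mob a x - mob a y) / ((1 - inner (mob a x) (mob a x)) * (1 - inner (mob a y) (mob a y)))
      = 2 * inner (x - y) (x - y) / ((1 - inner x x) * (1 - inner y y))"
    unfolding mob_dist[OF Dx[THEN less_imp_neq, symmetric] Dy[THEN less_imp_neq, symmetric]]
      mob_facts(2)[OF assms(1,2)] mob_facts(2)[OF assms(1,3)]
    using S4[OF A Dx Dy] by simp
  then show ?thesis unfolding hd_alt by simp
qed

lemma mob0: "mob a 0 = a" unfolding mob_def mD_def by simp

lemma hd_bound:
  fixes x :: "real ^ 'n"
  assumes "norm x < 1" "hyperbolic_dist 0 x \<le> r"
  shows "norm x \<le> sqrt ((cosh r - 1) / (cosh r + 1))"
proof -
  let ?X = "inner x x"
  have X: "0 \<le> ?X" "?X < 1" using inner_lt1[OF assms(1)] by auto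
  define t where "t = 1 + 2 * ?X / (1 - ?X)"
  have t1: "1 \<le> t" using X unfolding t_def by simp
  have "hyperbolic_dist 0 x = arcosh t" unfolding hd_alt t_def by simp
  then have "arcosh t \<le> r" using assms(2) by simp
  moreover have "0 \<le> arcosh t" using t1 by simp
  ultimately have "cosh (arcosh t) \<le> cosh r" using cosh_real_nonneg_le_iff by auto
  then have "t \<le> cosh r" using t1 by simp
  then have "2 * ?X \<le> (cosh r - 1) * (1 - ?X)" using X unfolding t_def by (simp add: field_simps)
  then have "?X * (cosh r + 1) \<le> cosh r - 1" by (simp add: algebra_simps)
  moreover have "0 < cosh r + 1" using cosh_real_ge_1[of r] by linarith
  ultimately have "?X \<le> (cosh r - 1) / (cosh r + 1)" by (simp add: field_simps)
  then have "sqrt ?X \<le> sqrt ((cosh r - 1) / (cosh r + 1))" by (rule real_sqrt_le_mono)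
  then show ?thesis by (simp add: norm_eq_sqrt_inner)
qed

lemma rho_lt1: "sqrt ((cosh r - 1) / (cosh r + 1)) < 1"
proof -
  have "0 < cosh r + 1" using cosh_real_ge_1[of r] by linarith
  then have "(cosh r - 1) / (cosh r + 1) < 1" by (simp add: field_simps)
  then show ?thesis by simp
qed

lemma hd_close:
  fixes a z :: "real ^ 'n"
  assumes "norm a \<le> \<rho>" "norm z \<le> \<rho>" "\<rho> < 1" "0 < e"
    and "norm (a - z) < (1 - \<rho>^2) * sqrt ((cosh e - 1) / 2)"
  shows "hyperbolic_dist a z < e" "0 < (1 - \<rho>^2) * sqrt ((cosh e - 1) / 2)"
proof -
  have r0: "0 \<le> \<rho>" using assms(1) norm_ge_zero order_trans by blast
  have rr: "\<rho>^2 < 1" using r0 assms(3) by (simp add: abs_square_less_1)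
  have ce: "1 < cosh e" using cosh_real_nonneg_less_iff[of 0 e] assms(4) by simp
  show dpos: "0 < (1 - \<rho>^2) * sqrt ((cosh e - 1) / 2)" using rr ce by simp
  have Xa: "inner a a \<le> \<rho>^2" using assms(1) norm_ge_zero power_mono
    by (metis power2_norm_eq_inner)
  have Xz: "inner z z \<le> \<rho>^2" using assms(2) norm_ge_zero power_mono
    by (metis power2_norm_eq_inner)
  have prod: "(1 - \<rho>^2) * (1 - \<rho>^2) \<le> (1 - inner a a) * (1 - inner z z)"
    using Xa Xz rr by (intro mult_mono) auto
  have pp: "0 < (1 - \<rho>^2) * (1 - \<rho>^2)" using rr by simp
  have "norm (a - z) ^ 2 < ((1 - \<rho>^2) * sqrt ((cosh e - 1) / 2)) ^ 2"
    using assms(5) by (simp add: power_strict_mono)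
  also have "\<dots> = (1 - \<rho>^2)^2 * (sqrt ((cosh e - 1) / 2))^2"
    by (simp add: power_mult_distrib)
  also have "(sqrt ((cosh e - 1) / 2))^2 = (cosh e - 1) / 2" using ce by simp
  also have "(1 - \<rho>^2)^2 = (1 - \<rho>^2) * (1 - \<rho>^2)" by (simp add: power2_eq_square)
  finally have n2: "2 * inner (a - z) (a - z) < (1 - \<rho>^2) * (1 - \<rho>^2) * (cosh e - 1)"
    by (simp add: power2_norm_eq_inner)
  have "2 * inner (a - z) (a - z) / ((1 - inner a a) * (1 - inner z z))
      \<le> 2 * inner (a - z) (a - z) / ((1 - \<rho>^2) * (1 - \<rho>^2))"
    using prod pp by (intro divide_left_mono) auto
  also have "\<dots> < cosh e - 1" using n2 pp by (simp add: field_simps)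
  finally have lt: "1 + 2 * inner (a - z) (a - z) / ((1 - inner a a) * (1 - inner z z)) < cosh e" by linarith
  have ge1: "1 \<le> 1 + 2 * inner (a - z) (a - z) / ((1 - inner a a) * (1 - inner z z))"
    using prod pp by (intro add_increasing2 divide_nonneg_pos) auto
  have "arcosh (1 + 2 * inner (a - z) (a - z) / ((1 - inner a a) * (1 - inner z z))) < arcosh (cosh e)"
    using lt ge1 cosh_real_ge_1[of e] by simp
  then show "hyperbolic_dist a z < e" unfolding hd_alt using assms(4) by (simp add: arcosh_cosh_real)
qed



lemma delta_pos:
  assumes "0 \<le> (\<rho>::real)" "\<rho> < 1" "0 < e"
  shows "0 < (1 - \<rho>^2) * sqrt ((cosh e - 1) / 2)"
proof -
  have rr: "\<rho>^2 < 1" using assms by (simp add: abs_square_less_1)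
  have ce: "1 < cosh e" using cosh_real_nonneg_less_iff[of 0 e] assms(3) by simp
  show ?thesis using rr ce by simp
qed

lemma rho_nonneg: "0 \<le> sqrt ((cosh r - 1) / (cosh r + 1))"
proof -
  have "0 \<le> (cosh r - 1) / (cosh r + 1)" using cosh_real_ge_1[of r] by (simp add: divide_nonneg_pos)
  then show ?thesis by simp
qed

lemma euclid_unique: "almost_isometry_unique TYPE('b) (UNIV :: (real ^ 'n) set) dist"
  unfolding almost_isometry_unique_def
proof (intro allI impI, elim conjE)
  fix Y :: "'b set" and dY assume MY: "Metric_space Y dY" and AI: "almost_isometric (UNIV :: (real ^ 'n) set) dist Y dY"
  show "isometric (UNIV :: (real ^ 'n) set) dist Y dY"
  proof (rule general[OF MY AI, where bse = 0])
    show "(0::real^'n) \<in> UNIV" by simp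
    show "\<And>x. x \<in> UNIV \<Longrightarrow> dist x x = 0" by simp
    fix p :: "real ^ 'n"
    have bij: "bij_betw (\<lambda>x. x + p) UNIV UNIV"
      by (rule bij_betw_byWitness[where f' = "\<lambda>x. x - p"]) auto
    show "\<exists>g. bij_betw g (UNIV :: (real ^ 'n) set) UNIV \<and> g 0 = p \<and> (\<forall>a\<in>UNIV. \<forall>b\<in>UNIV. dist (g a) (g b) = dist a b)"
      by (rule exI[where x = "\<lambda>x. x + p"]) (use bij in \<open>simp add: dist_norm\<close>)
  next
    fix r :: real and s :: "nat \<Rightarrow> real ^ 'n"
    assume "\<forall>n. s n \<in> UNIV \<and> dist 0 (s n) \<le> r"
    then have "\<forall>n. s n \<in> cball 0 r" by simp
    from seq_compactE[OF compact_imp_seq_compact[OF compact_cball] this]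
    obtain l and \<sigma> :: "nat \<Rightarrow> nat" where "strict_mono \<sigma>" "(s \<circ> \<sigma>) \<longlonglongrightarrow> l" by blast
    then show "\<exists>x\<in>UNIV. \<exists>\<sigma>::nat\<Rightarrow>nat. strict_mono \<sigma> \<and> (\<forall>e>0. \<exists>N. \<forall>n\<ge>N. dist (s (\<sigma> n)) x < e)"
      unfolding lim_sequentially by auto
  next
    fix r e :: real assume e: "0 < e"
    have tbb: "\<forall>\<epsilon>>0. \<exists>k. finite k \<and> k \<subseteq> cball (0::real^'n) r \<and> cball 0 r \<subseteq> (\<Union>x\<in>k. ball x \<epsilon>)"
      by (rule seq_compact_imp_totally_bounded[OF compact_imp_seq_compact[OF compact_cball[of "0::real^'n" r]]])
    from tbb[rule_format, OF e] obtain k where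
      k: "finite k" "k \<subseteq> cball (0::real^'n) r" "cball 0 r \<subseteq> (\<Union>x\<in>k. ball x e)"
      by (elim exE conjE)
    have cov: "\<exists>a\<in>k. dist a x < e" if "dist 0 x \<le> r" for x :: "real^'n"
    proof -
      have "x \<in> (\<Union>x\<in>k. ball x e)" by (rule subsetD[OF k(3)]) (use that in simp)
      then obtain a where "a \<in> k" "x \<in> ball a e" by (rule UN_E)
      then show ?thesis by (simp add: bexI)
    qed
    show "\<exists>F. finite F \<and> F \<subseteq> (UNIV :: (real^'n) set) \<and> (\<forall>x\<in>UNIV. dist 0 x \<le> r \<longrightarrow> (\<exists>a\<in>F. dist a x < e))"
    proof (intro exI[where x = k] conjI)
      show "finite k" by (rule k(1))
      show "k \<subseteq> UNIV" by simp
      show "\<forall>x\<in>UNIV. dist 0 x \<le> r \<longrightarrow> (\<exists>a\<in>k. dist a x < e)" using cov by simp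
    qed
  qed
qed

lemma hyp_unique: "almost_isometry_unique TYPE('c) (hyperbolic_space :: (real ^ 'n) set) hyperbolic_dist"
  unfolding almost_isometry_unique_def
proof (intro allI impI, elim conjE)
  fix Y :: "'c set" and dY assume MY: "Metric_space Y dY"
    and AI: "almost_isometric (hyperbolic_space :: (real ^ 'n) set) hyperbolic_dist Y dY"
  show "isometric (hyperbolic_space :: (real ^ 'n) set) hyperbolic_dist Y dY"
  proof (rule general[OF MY AI, where bse = 0])
    show "(0::real^'n) \<in> hyperbolic_space" by (simp add: hyperbolic_space_def)
    show "\<And>x. x \<in> hyperbolic_space \<Longrightarrow> hyperbolic_dist x x = 0" by (simp add: hyperbolic_dist_def)
    fix p :: "real ^ 'n" assume "p \<in> hyperbolic_space"
    then have p: "norm p < 1" by (simp add: hyperbolic_space_def)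
    have bij: "bij_betw (mob p) (ball 0 1) (ball 0 1)"
    proof (rule bij_betw_byWitness[where f' = "mob (-p)"])
      show "\<forall>a\<in>ball 0 1. mob (- p) (mob p a) = a" using mob_inv[of "-p"] p by simp
      show "\<forall>a'\<in>ball 0 1. mob p (mob (- p) a') = a'" using mob_inv[of p] p by simp
      show "mob p ` ball 0 1 \<subseteq> ball 0 1" using mob_facts(1)[of p] p by auto
      show "mob (- p) ` ball 0 1 \<subseteq> ball 0 1" using mob_facts(1)[of "-p"] p by auto
    qed
    show "\<exists>g. bij_betw g (hyperbolic_space :: (real ^ 'n) set) hyperbolic_space \<and> g 0 = p \<and>
        (\<forall>a\<in>hyperbolic_space. \<forall>b\<in>hyperbolic_space. hyperbolic_dist (g a) (g b) = hyperbolic_dist a b)"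
      unfolding hyperbolic_space_def
      by (rule exI[where x = "mob p"]) (use hd_mob[of p] p bij in \<open>simp add: mob0\<close>)
  next
    fix r :: real and s :: "nat \<Rightarrow> real ^ 'n"
    assume sr: "\<forall>n. s n \<in> hyperbolic_space \<and> hyperbolic_dist 0 (s n) \<le> r"
    define \<rho> where "\<rho> = sqrt ((cosh r - 1) / (cosh r + 1))"
    have \<rho>: "0 \<le> \<rho>" "\<rho> < 1" unfolding \<rho>_def using rho_nonneg rho_lt1 by auto
    have "s n \<in> cball 0 \<rho>" for n
    proof -
      have "norm (s n) < 1" "hyperbolic_dist 0 (s n) \<le> r" using sr unfolding hyperbolic_space_def by auto
      then show ?thesis using hd_bound[of "s n" r] unfolding \<rho>_def by simp
    qed
    then have "\<forall>n. s n \<in> cball 0 \<rho>" by blast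
    from seq_compactE[OF compact_imp_seq_compact[OF compact_cball] this]
    obtain l and \<sigma> :: "nat \<Rightarrow> nat" where l: "l \<in> cball 0 \<rho>" "strict_mono \<sigma>" "(s \<circ> \<sigma>) \<longlonglongrightarrow> l" by blast
    have sn: "norm (s n) \<le> \<rho>" for n using \<open>\<forall>n. s n \<in> cball 0 \<rho>\<close> by simp
    have ln: "norm l \<le> \<rho>" using l(1) by simp
    have "\<exists>N. \<forall>n\<ge>N. hyperbolic_dist (s (\<sigma> n)) l < e" if "0 < e" for e
    proof -
      have d: "0 < (1 - \<rho>^2) * sqrt ((cosh e - 1) / 2)" by (rule delta_pos[OF \<rho> that])
      obtain N where "\<forall>n\<ge>N. dist (s (\<sigma> n)) l < (1 - \<rho>^2) * sqrt ((cosh e - 1) / 2)"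
        using l(3) d unfolding lim_sequentially by auto
      then show ?thesis using hd_close(1)[OF sn ln \<rho>(2) that] by (auto simp: dist_norm)
    qed
    moreover have "l \<in> hyperbolic_space" using ln \<rho>(2) by (simp add: hyperbolic_space_def)
    ultimately show "\<exists>x\<in>hyperbolic_space. \<exists>\<sigma>::nat\<Rightarrow>nat. strict_mono \<sigma> \<and> (\<forall>e>0. \<exists>N. \<forall>n\<ge>N. hyperbolic_dist (s (\<sigma> n)) x < e)"
      using l(2) by blast
  next
    fix r e :: real assume e: "0 < e"
    define \<rho> where "\<rho> = sqrt ((cosh r - 1) / (cosh r + 1))"
    have \<rho>: "0 \<le> \<rho>" "\<rho> < 1" unfolding \<rho>_def using rho_nonneg rho_lt1 by auto
    define \<delta> where "\<delta> = (1 - \<rho>^2) * sqrt ((cosh e - 1) / 2)"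
    have d: "0 < \<delta>" unfolding \<delta>_def by (rule delta_pos[OF \<rho> e])
    have tbb: "\<forall>\<epsilon>>0. \<exists>k. finite k \<and> k \<subseteq> cball (0::real^'n) \<rho> \<and> cball 0 \<rho> \<subseteq> (\<Union>x\<in>k. ball x \<epsilon>)"
      by (rule seq_compact_imp_totally_bounded[OF compact_imp_seq_compact[OF compact_cball[of "0::real^'n" \<rho>]]])
    from tbb[rule_format, OF d] obtain k where
      k: "finite k" "k \<subseteq> cball (0::real^'n) \<rho>" "cball 0 \<rho> \<subseteq> (\<Union>x\<in>k. ball x \<delta>)"
      by (elim exE conjE)
    have "k \<subseteq> hyperbolic_space" using k(2) \<rho>(2) unfolding hyperbolic_space_def
      by (meson mem_ball_0 mem_cball_0 order.strict_trans1 subset_iff)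
    moreover have cov: "\<exists>a\<in>k. hyperbolic_dist a x < e" if "x \<in> hyperbolic_space" "hyperbolic_dist 0 x \<le> r" for x
    proof -
      have "norm x < 1" using that(1) unfolding hyperbolic_space_def by simp
      then have xn: "norm x \<le> \<rho>" using hd_bound[of x r] that(2) unfolding \<rho>_def by blast
      then have "x \<in> (\<Union>x\<in>k. ball x \<delta>)" by (intro subsetD[OF k(3)]) simp
      then obtain a where "a \<in> k" "x \<in> ball a \<delta>" by (rule UN_E)
      then have a: "a \<in> k" "dist a x < \<delta>" by auto
      have an: "norm a \<le> \<rho>" using a(1) k(2) by auto
      show ?thesis using hd_close(1)[OF an xn \<rho>(2) e] a unfolding \<delta>_def by (auto simp: dist_norm)
    qed
    ultimately show "\<exists>F. finite F \<and> F \<subseteq> (hyperbolic_space :: (real^'n) set) \<and> (\<forall>x\<in>hyperbolic_space. hyperbolic_dist 0 x \<le> r \<longrightarrow> (\<exists>a\<in>F. hyperbolic_dist a x < e))"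
    proof (intro exI[where x = k] conjI)
      show "finite k" by (rule k(1))
      show "\<forall>x\<in>hyperbolic_space. hyperbolic_dist 0 x \<le> r \<longrightarrow> (\<exists>a\<in>k. hyperbolic_dist a x < e)"
        using cov by simp
    qed
  qed
qed

theorem corollary3p2:
  shows "almost_isometry_unique TYPE('b) (UNIV :: (real ^ 'n) set) dist
       \<and> almost_isometry_unique TYPE('c) (hyperbolic_space :: (real ^ 'n) set) hyperbolic_dist"
  using euclid_unique hyp_unique by blast


end
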